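(* Let $c>0$, $\alpha>0$, $\lambda>1$, $\varepsilon=\lambda-1$, let $r\le 1$ be a $(c,\alpha)$-Diophantine $\lambda$-radius function and $r'=\lambda r$. Let $V'\subset V\subset\mathbb C$ be open with $\delta(V',V)\ge\varepsilon$ and let $f=(f_n)$ be holomorphic sequences on $V(r)$ satisfying $\sup_{V(r)_n}|f_n|\le A\rho^n$ with $A>0$, $0<\rho<1$. Then the sum $S(f)$ is of Gevrey class $\alpha$ at each point $z_0\in\mathcal R(V'(r'))$: there exist constants $K,D>0$ (independent of $m$) such that $$\frac{1}{m!}\,|S(f^{(m)})(z_0)|\le K\,D^m\, m^{\alpha m}\qquad\text{for all } m\ge 1 .$$
   Context: Stacked space $\mathbb X=\mathbb N\times\mathbb P$ ($\mathbb N=\{1,2,\dots\}$), discrete pole set $\mathcal P\subset\mathbb X$, $P_n$ the poles on sheet $n$. Radius function: $r:\mathcal P\to\mathbb R_{>0}$ constant on each sheet (value $r_n$), closed discs of radius $r$ around distinct poles of a sheet disjoint; $\lambda$-radius function: $\lambda r$ is a radius function; $(c,\alpha)$-Diophantine: $r_n\ge c/n^\alpha$ for all $n$. $W(\rho)_n=\{z\in W:|z-a|\ge\rho_n\ \forall a\in P_n\}$, $\mathcal R(W(\rho))=\bigcap_nW(\rho)_n$; $S(g)=\sum_n g_n$; $f^{(m)}=(f_n^{(m)})$. Huygens distance $\delta(U,V)=\sup\{\rho:\ D(z,\rho)\subset V\ \forall z\in U\}$. *)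

theory Defs
  imports "HOL-Complex_Analysis.Complex_Analysis"
begin

text \<open>Stacked space: sheets indexed by n >= 1; P n is the set of poles on sheet n
  (a subset of the complex plane); a function on the pole set constant on sheets
  is represented by its sheet values r n.\<close>

definition discrete_poles :: "(nat \<Rightarrow> complex set) \<Rightarrow> bool" where
  "discrete_poles P \<longleftrightarrow> (\<forall>n\<ge>1. \<forall>z. \<not> z islimpt P n)"

definition radius_fun :: "(nat \<Rightarrow> complex set) \<Rightarrow> (nat \<Rightarrow> real) \<Rightarrow> bool" where
  "radius_fun P r \<longleftrightarrow> (\<forall>n\<ge>1. r n > 0 \<and>
      (\<forall>a\<in>P n. \<forall>b\<in>P n. a \<noteq> b \<longrightarrow> cball a (r n) \<inter> cball b (r n) = {}))"

definition lambda_radius_fun :: "real \<Rightarrow> (nat \<Rightarrow> complex set) \<Rightarrow> (nat \<Rightarrow> real) \<Rightarrow> bool" where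
  "lambda_radius_fun lam P r \<longleftrightarrow> radius_fun P r \<and> radius_fun P (\<lambda>n. lam * r n)"

definition diophantine :: "real \<Rightarrow> real \<Rightarrow> (nat \<Rightarrow> real) \<Rightarrow> bool" where
  "diophantine c \<alpha> r \<longleftrightarrow> (\<forall>n\<ge>1. r n \<ge> c / (real n powr \<alpha>))"

definition sheet_set :: "(nat \<Rightarrow> complex set) \<Rightarrow> complex set \<Rightarrow> (nat \<Rightarrow> real) \<Rightarrow> nat \<Rightarrow> complex set" where
  "sheet_set P W \<rho> n = {z \<in> W. \<forall>a\<in>P n. cmod (z - a) \<ge> \<rho> n}"

definition reg_set :: "(nat \<Rightarrow> complex set) \<Rightarrow> complex set \<Rightarrow> (nat \<Rightarrow> real) \<Rightarrow> complex set" where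
  "reg_set P W \<rho> = (\<Inter>n\<in>{1..}. sheet_set P W \<rho> n)"

text \<open>Huygens distance, valued in the extended reals (it is +infinity e.g. when V = UNIV)\<close>
definition huygens_dist :: "complex set \<Rightarrow> complex set \<Rightarrow> ereal" where
  "huygens_dist U V = Sup {ereal \<rho> | \<rho>. \<forall>z\<in>U. ball z \<rho> \<subseteq> V}"

end

theory Submission
  imports Defs
begin

lemma powr_exp_bound:
  fixes b k x :: real
  assumes "b > 0" "k > 0" "x > 0"
  shows "x powr k * exp (-b*x) \<le> (k/(b*exp 1)) powr k"
proof -
  have y: "ln (b*x/k) \<le> b*x/k - 1" using assms by (intro ln_le_minus_one) simp
  have "ln (b*x/k) = ln b + ln x - ln k" using assms by (simp add: ln_div ln_mult)
  with y have "k*(ln b + ln x - ln k) \<le> k*(b*x/k - 1)"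
    using assms by (intro mult_left_mono) auto
  hence h: "k * ln x - b*x \<le> k * (ln k - ln b - 1)" using assms by (simp add: algebra_simps)
  have "x powr k * exp (-b*x) = exp (k * ln x - b*x)"
    using assms by (simp add: powr_def exp_diff exp_minus field_simps)
  also have "\<dots> \<le> exp (k * (ln k - ln b - 1))" using h by simp
  also have "\<dots> = (k/(b*exp 1)) powr k"
    using assms by (simp add: powr_def ln_div ln_mult algebra_simps)
  finally show ?thesis .
qed

theorem lemmaL:
  fixes c \<alpha> lam \<epsilon> A \<rho> :: real
    and P :: "nat \<Rightarrow> complex set" and r :: "nat \<Rightarrow> real"
    and V V' :: "complex set" and f :: "nat \<Rightarrow> complex \<Rightarrow> complex"
  assumes "c > 0" "\<alpha> > 0" "lam > 1" "\<epsilon> = lam - 1"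
    and "discrete_poles P"
    and "lambda_radius_fun lam P r" "diophantine c \<alpha> r" "\<forall>n\<ge>1. r n \<le> 1"
    and "open V" "open V'" "V' \<subseteq> V" "huygens_dist V' V \<ge> ereal \<epsilon>"
    and "A > 0" "0 < \<rho>" "\<rho> < 1"
    and "\<forall>n\<ge>1. f n holomorphic_on sheet_set P V r n"
    and "\<forall>n\<ge>1. \<forall>z\<in>sheet_set P V r n. cmod (f n z) \<le> A * \<rho> ^ n"
  shows "\<forall>z0\<in>reg_set P V' (\<lambda>n. lam * r n).
           \<exists>K D. K > 0 \<and> D > 0 \<and>
             (\<forall>m\<ge>1. summable (\<lambda>n. (deriv ^^ m) (f (Suc n)) z0) \<and>
                 cmod (\<Sum>n. (deriv ^^ m) (f (Suc n)) z0) / fact m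
                   \<le> K * D ^ m * real m powr (\<alpha> * real m))"
proof
  fix z0 assume z0: "z0 \<in> reg_set P V' (\<lambda>n. lam * r n)"
  have eps: "\<epsilon> > 0" using assms by simp
  have z0V': "z0 \<in> V'" and z0P: "\<And>N a. N \<ge> 1 \<Longrightarrow> a \<in> P N \<Longrightarrow> cmod (z0 - a) \<ge> lam * r N"
    using z0 by (auto simp: reg_set_def sheet_set_def)
  have ballV: "ball z0 \<epsilon> \<subseteq> V"
  proof
    fix w assume w: "w \<in> ball z0 \<epsilon>"
    have "ereal (dist z0 w) < huygens_dist V' V" proof -
      have "ereal (dist z0 w) < ereal \<epsilon>" using w by simp
      thus ?thesis using assms(12) by (rule less_le_trans)
    qed
    then obtain x where "x \<in> {ereal \<rho> | \<rho>. \<forall>z\<in>V'. ball z \<rho> \<subseteq> V}" "ereal (dist z0 w) < x"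
      unfolding huygens_dist_def less_Sup_iff by blast
    then obtain s where "\<forall>z\<in>V'. ball z s \<subseteq> V" "dist z0 w < s" by auto
    thus "w \<in> V" using z0V' by (meson mem_ball subsetD)
  qed
  define b where "b = - ln \<rho> / 2"
  have b: "b > 0" using assms by (simp add: b_def)
  define q where "q = exp (-b)"
  have q: "0 < q" "q < 1" using b by (auto simp: q_def)
  define E where "E = (\<alpha>/(b*exp 1)) powr \<alpha>"
  have E: "E > 0" using b assms by (simp add: E_def)
  define D where "D = (2/(\<epsilon>*c)) * E"
  have D: "D > 0" using E eps assms by (simp add: D_def)
  define K where "K = A * q / (1 - q)"
  have K: "K > 0" using q assms by (simp add: K_def)
  have rpos: "\<And>N. N \<ge> 1 \<Longrightarrow> r N \<ge> c / real N powr \<alpha>"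
    using assms(7) by (simp add: diophantine_def)
  have rpos': "\<And>N. N \<ge> 1 \<Longrightarrow> r N > 0"
  proof -
    fix N :: nat assume "N \<ge> 1"
    hence "c / real N powr \<alpha> > 0" using assms(1) by simp
    thus "r N > 0" using rpos[OF \<open>N \<ge> 1\<close>] by linarith
  qed
  show "\<exists>K D. K > 0 \<and> D > 0 \<and>
             (\<forall>m\<ge>1. summable (\<lambda>n. (deriv ^^ m) (f (Suc n)) z0) \<and>
                 cmod (\<Sum>n. (deriv ^^ m) (f (Suc n)) z0) / fact m
                   \<le> K * D ^ m * real m powr (\<alpha> * real m))"
  proof (intro exI conjI allI impI)
    show "K > 0" "D > 0" using K D by auto
    fix m :: nat assume m: "m \<ge> 1"
    define g where "g n = fact m * A * D^m * real m powr (\<alpha> * real m) * q ^ Suc n" for n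
    have termb: "cmod ((deriv ^^ m) (f (Suc n)) z0) \<le> g n" for n
    proof -
      define N where "N = Suc n"
      have N1: "N \<ge> 1" by (simp add: N_def)
      have rN: "r N > 0" "r N \<le> 1" "r N \<ge> c / real N powr \<alpha>"
        using rpos' rpos assms(8) N1 by auto
      define R where "R = \<epsilon> * r N / 2"
      have R: "R > 0" using eps rN by (simp add: R_def)
      have ballS: "ball z0 (\<epsilon> * r N) \<subseteq> sheet_set P V r N"
      proof
        fix w assume w: "w \<in> ball z0 (\<epsilon> * r N)"
        have "\<epsilon> * r N \<le> \<epsilon> * 1" using eps rN by (intro mult_left_mono) auto
        hence "w \<in> V" using w ballV by auto
        moreover have "\<forall>a\<in>P N. cmod (w - a) \<ge> r N"
        proof
          fix a assume a: "a \<in> P N"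
          have h1: "cmod (z0 - a) \<ge> lam * r N" using z0P[OF N1 a] .
          have h2: "cmod (z0 - w) < \<epsilon> * r N" using w by (simp add: dist_norm)
          have h3: "cmod (z0 - a) \<le> cmod (z0 - w) + cmod (w - a)"
            using norm_triangle_ineq[of "z0 - w" "w - a"] by simp
          have "lam * r N = r N + \<epsilon> * r N" unfolding assms(4) by (simp add: left_diff_distrib)
          thus "cmod (w - a) \<ge> r N" using h1 h2 h3 by linarith
        qed
        ultimately show "w \<in> sheet_set P V r N" by (simp add: sheet_set_def)
      qed
      have hol: "f N holomorphic_on ball z0 (\<epsilon> * r N)"
        using assms(16) N1 ballS holomorphic_on_subset by blast
      have cb: "cball z0 R \<subseteq> ball z0 (\<epsilon> * r N)"
        using R by (simp add: cball_subset_ball_iff R_def)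
      have cont: "continuous_on (cball z0 R) (f N)"
        using hol cb holomorphic_on_imp_continuous_on continuous_on_subset by blast
      have hol2: "f N holomorphic_on ball z0 R"
        using hol cb ball_subset_cball holomorphic_on_subset by blast
      have bnd: "norm (f N x) \<le> A * \<rho> ^ N" if "norm (z0 - x) = R" for x
      proof -
        have "x \<in> cball z0 R" using that by (simp add: dist_norm)
        hence "x \<in> sheet_set P V r N" using cb ballS by blast
        thus ?thesis using assms(17) N1 by blast
      qed
      have c1: "cmod ((deriv ^^ m) (f N) z0) \<le> fact m * (A * \<rho> ^ N) / R ^ m"
        by (rule Cauchy_inequality[OF hol2 cont R bnd])
      have NP: "real N powr \<alpha> > 0" using N1 by simp
      have iR: "1 / R \<le> (2/(\<epsilon>*c)) * real N powr \<alpha>"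
      proof -
        have "\<epsilon> * (c / real N powr \<alpha>) \<le> \<epsilon> * r N" using rN eps by (intro mult_left_mono) auto
        hence "\<epsilon> * (c / real N powr \<alpha>) / 2 \<le> R" by (simp add: R_def)
        hence "\<epsilon> * c / (2 * real N powr \<alpha>) \<le> R" by simp
        hence "1 / R \<le> 1 / (\<epsilon> * c / (2 * real N powr \<alpha>))"
          using eps assms(1) NP R by (intro divide_left_mono) auto
        thus ?thesis using eps assms(1) NP by (simp add: field_simps)
      qed
      have iRm: "(1/R)^m \<le> (2/(\<epsilon>*c))^m * real N powr (\<alpha> * real m)"
      proof -
        have "(1/R)^m \<le> ((2/(\<epsilon>*c)) * real N powr \<alpha>)^m"
          using iR R by (intro power_mono) auto
        also have "\<dots> = (2/(\<epsilon>*c))^m * real N powr (\<alpha> * real m)"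
        proof -
          have "(real N powr \<alpha>) ^ m = real N powr (real m * \<alpha>)"
            using N1 by (intro powr_power) auto
          thus ?thesis by (simp only: power_mult_distrib mult.commute)
        qed
        finally show ?thesis .
      qed
      have rhoN: "\<rho> ^ N = exp (- b * real N) * q ^ N"
      proof -
        have "\<rho> ^ N = exp (ln \<rho>) ^ N" using assms by simp
        also have "\<dots> = exp (real N * ln \<rho>)" by (simp add: exp_of_nat_mult)
        also have "\<dots> = exp (- b * real N) * exp (real N * (- b))"
          by (simp add: b_def exp_add[symmetric] algebra_simps)
        also have "exp (real N * (- b)) = q ^ N" unfolding q_def by (rule exp_of_nat_mult)
        finally show ?thesis .
      qed
      have key: "real N powr (\<alpha> * real m) * \<rho> ^ N \<le> E ^ m * real m powr (\<alpha> * real m) * q ^ N"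
      proof -
        have km: "\<alpha> * real m > 0" using assms(2) m by simp
        have "real N powr (\<alpha> * real m) * \<rho> ^ N
              = (real N powr (\<alpha> * real m) * exp (- b * real N)) * q ^ N"
          by (simp add: rhoN mult_ac)
        also have "\<dots> \<le> ((\<alpha> * real m)/(b*exp 1)) powr (\<alpha> * real m) * q ^ N"
          using powr_exp_bound[OF b km, of "real N"] N1 q by (intro mult_right_mono) auto
        also have "((\<alpha> * real m)/(b*exp 1)) powr (\<alpha> * real m)
               = (\<alpha>/(b*exp 1)) powr (\<alpha> * real m) * real m powr (\<alpha> * real m)"
        proof -
          have "(\<alpha> * real m)/(b*exp 1) = (\<alpha>/(b*exp 1)) * real m" by simp
          thus ?thesis by (simp only: powr_mult)
        qed
        also have "(\<alpha>/(b*exp 1)) powr (\<alpha> * real m) = E ^ m"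
          using assms(2) b by (simp add: E_def powr_power mult_ac)
        finally show ?thesis .
      qed
      have "cmod ((deriv ^^ m) (f N) z0) \<le> fact m * A * (1/R)^m * \<rho> ^ N"
        using c1 by (simp add: power_one_over field_simps)
      also have "\<dots> \<le> fact m * A * ((2/(\<epsilon>*c))^m * real N powr (\<alpha> * real m)) * \<rho> ^ N"
        using iRm assms by (intro mult_right_mono mult_left_mono) auto
      also have "\<dots> = fact m * A * (2/(\<epsilon>*c))^m * (real N powr (\<alpha> * real m) * \<rho> ^ N)"
        by (simp add: mult_ac)
      also have "\<dots> \<le> fact m * A * (2/(\<epsilon>*c))^m * (E ^ m * real m powr (\<alpha> * real m) * q ^ N)"
        using key assms eps by (intro mult_left_mono) auto
      also have "\<dots> = g n"
      proof -
        have "D ^ m = (2/(\<epsilon>*c))^m * E^m" unfolding D_def by (rule power_mult_distrib)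
        thus ?thesis by (simp add: g_def N_def mult_ac)
      qed
      finally show ?thesis by (simp add: N_def)
    qed
    have qg: "summable (\<lambda>n. q ^ n)" using q by (intro summable_geometric) auto
    have qs: "summable (\<lambda>n. q ^ Suc n)"
    proof -
      have "summable (\<lambda>n. q * q ^ n)" using qg by (rule summable_mult)
      thus ?thesis by simp
    qed
    have sg: "summable g" unfolding g_def using qs by (rule summable_mult)
    have summ: "summable (\<lambda>n. (deriv ^^ m) (f (Suc n)) z0)"
      using sg termb by (rule summable_comparison_test')
    have "cmod (\<Sum>n. (deriv ^^ m) (f (Suc n)) z0) \<le> suminf g"
      using termb sg by (rule norm_suminf_le)
    also have "suminf g = fact m * A * D^m * real m powr (\<alpha> * real m) * (q / (1 - q))"
    proof -
      have "(\<Sum>n. q ^ Suc n) = q * (1/(1-q))"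
      proof -
        have "(\<Sum>n. q * q ^ n) = q * (\<Sum>n. q ^ n)" using qg by (rule suminf_mult)
        moreover have "(\<Sum>n. q ^ n) = 1/(1-q)" using q by (intro suminf_geometric) auto
        ultimately show ?thesis by simp
      qed
      moreover note qs
      ultimately show ?thesis unfolding g_def by (subst suminf_mult) auto
    qed
    finally have "cmod (\<Sum>n. (deriv ^^ m) (f (Suc n)) z0) / fact m \<le> A * D^m * real m powr (\<alpha> * real m) * (q / (1 - q))"
      by (simp add: divide_le_eq mult_ac)
    thus "cmod (\<Sum>n. (deriv ^^ m) (f (Suc n)) z0) / fact m
                   \<le> K * D ^ m * real m powr (\<alpha> * real m)"
      by (simp add: K_def mult_ac)
    show "summable (\<lambda>n. (deriv ^^ m) (f (Suc n)) z0)" by (rule summ)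
  qed
qed

end
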